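(* Let $x$ be a stable g-matching with $x\ne x^{\max}$. For each rotation $R\in\mathcal R(x)$, the g-matching $x':=x+\chi^R$ is stable and satisfies $x\prec_F x'$.
   Context: Let $G=(V,E)$ be a finite bipartite graph with color classes $W$ and $F$; the edge joining $w\in W$ and $f\in F$ is written $wf$. Let $b\in\mathbb Z_+^E$ be capacities. For $v\in V$, $E_v$ is the set of edges at $v$, $\mathcal B_v=\{z\in\mathbb Z_+^{E_v}: z\le b|_{E_v}\}$, $\mathbf 1^e$ the unit vector of $e$, $|z|=\sum_e|z(e)|$, $\wedge,\vee$ componentwise min/max. Each $v$ has a choice function $C_v:\mathcal B_v\to\mathcal B_v$ with $C_v(z)\le z$ and, for all $z,z'$: (A1) $z\ge z'\ge C_v(z)\Rightarrow C_v(z')=C_v(z)$; (A2) $z\ge z'\Rightarrow C_v(z)\wedge z'\le C_v(z')$; (A3) $z\ge z'\Rightarrow|C_v(z)|\ge|C_v(z')|$. $z$ is acceptable if $C_v(z)=z$; for distinct acceptable $z,z'$, $z'\prec_v z$ iff $C_v(z\vee z')=z$. $x_v$ = restriction of $x$ to $E_v$. A g-matching is $x\in\mathbb Z_+^E$, $x\le b$, each $x_v$ acceptable; $x\prec_F y$ (distinct) iff $x_f\preceq_f y_f$ for all $f\in F$. $e\in E_v$ is interesting for $v$ under acceptable $z$ if some $z'\in\mathcal B_v$ has $z'(e)>z(e)$, $z'(e')=z(e')$ for $e'\neq e$, $C_v(z')(e)>z(e)$; $e=wf$ blocks a g-matching $x$ if it is interesting for $w$ under $x_w$ and for $f$ under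 $x_f$; stable g-matchings (no blocking edges) form a nonempty finite distributive lattice under $\prec_F$ with maximum $x^{\max}$. Rotations: for stable $x$, $U_F^+(x)$ = edges $wf$ interesting for $f$ under $x_f$; $U_F^-(x)$ = edges $wf$ with $x(wf)>0$ not interesting for $f$. Legal $f$-pair: $(a,c)$, $a\in U_F^+(x)\cap E_f$, $c\in E_f\setminus\{a\}$, $C_f(x_f+\mathbf 1^a)=x_f+\mathbf 1^a-\mathbf 1^c$. Legal $w$-pair: $(c,a)$, $c\in U_F^-(x)\cap E_w$, $a\in U_F^+(x)\cap E_w$, $x_w+\mathbf 1^a-\mathbf 1^c$ acceptable; essential if no $d\in (U_F^+(x)\cap E_w)\setminus\{a\}$ is interesting for $w$ under $x_w+\mathbf 1^a-\mathbf 1^c$ (at most one essential pair per $c$). Digraph $\mathcal D$: vertices $w^e,f^e$ for $e=wf\in U_F^+(x)\cup U_F^-(x)$, arcs $(w^a,f^a)$ for $a\in U_F^+(x)$, $(f^c,w^c)$ for $c\in U_F^-(x)$, $(f^a,f^c)$ for legal $f$-pairs $(a,c)$, $(w^c,w^a)$ for essential $w$-pairs $(c,a)$. Repeatedly delete vertices with no entering arc; the remainder is a disjoint union of directed cycles, each giving a cyclic sequence $(a_1,c_1,\dots,a_k,c_k)$ of distinct edges of $G$; this is a rotation $R$ applicable to $x$, with $\chi^R\in\{0,\pm1\}^E$ equal to $1$ on $\{a_i\}$, $-1$ on $\{c_i\}$, $0$ elsewhere; $\mathcal R(x)$ is the set of these rotations. *)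

theory Defs
  imports Main
begin

text \<open>Vectors in Z_+^E are integer-valued functions on edges,
 nonnegativity being imposed explicitly. A vector on E_v is a function vanishing outside E_v.\<close>

type_synonym ('w,'f) vec = "('w \<times> 'f) \<Rightarrow> int"

definition Ew :: "('w \<times> 'f) set \<Rightarrow> 'w \<Rightarrow> ('w \<times> 'f) set" where
  "Ew E w = {e \<in> E. fst e = w}"

definition Ef :: "('w \<times> 'f) set \<Rightarrow> 'f \<Rightarrow> ('w \<times> 'f) set" where
  "Ef E f = {e \<in> E. snd e = f}"

definition res :: "('w \<times> 'f) set \<Rightarrow> ('w,'f) vec \<Rightarrow> ('w,'f) vec" where
  "res Ev x = (\<lambda>e. if e \<in> Ev then x e else 0)"

definition unitv :: "('w \<times> 'f) \<Rightarrow> ('w,'f) vec" where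
  "unitv a = (\<lambda>e. if e = a then 1 else 0)"

definition vsize :: "('w \<times> 'f) set \<Rightarrow> ('w,'f) vec \<Rightarrow> int" where
  "vsize Ev z = (\<Sum>e\<in>Ev. \<bar>z e\<bar>)"

definition Bset :: "('w,'f) vec \<Rightarrow> ('w \<times> 'f) set \<Rightarrow> ('w,'f) vec set" where
  "Bset b Ev = {z. \<forall>e. (e \<in> Ev \<longrightarrow> 0 \<le> z e \<and> z e \<le> b e) \<and> (e \<notin> Ev \<longrightarrow> z e = 0)}"

definition choice_fun :: "('w,'f) vec \<Rightarrow> ('w \<times> 'f) set \<Rightarrow> (('w,'f) vec \<Rightarrow> ('w,'f) vec) \<Rightarrow> bool" where
  "choice_fun b Ev C \<longleftrightarrow>
     (\<forall>z \<in> Bset b Ev. C z \<in> Bset b Ev \<and> C z \<le> z) \<and>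
     (\<forall>z \<in> Bset b Ev. \<forall>z' \<in> Bset b Ev. z \<ge> z' \<and> z' \<ge> C z \<longrightarrow> C z' = C z) \<and>
     (\<forall>z \<in> Bset b Ev. \<forall>z' \<in> Bset b Ev. z \<ge> z' \<longrightarrow> (\<lambda>e. min (C z e) (z' e)) \<le> C z') \<and>
     (\<forall>z \<in> Bset b Ev. \<forall>z' \<in> Bset b Ev. z \<ge> z' \<longrightarrow> vsize Ev (C z) \<ge> vsize Ev (C z'))"

definition acceptable :: "('w,'f) vec \<Rightarrow> ('w \<times> 'f) set \<Rightarrow> (('w,'f) vec \<Rightarrow> ('w,'f) vec) \<Rightarrow> ('w,'f) vec \<Rightarrow> bool" where
  "acceptable b Ev C z \<longleftrightarrow> z \<in> Bset b Ev \<and> C z = z"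

definition pref_strict :: "('w,'f) vec \<Rightarrow> ('w \<times> 'f) set \<Rightarrow> (('w,'f) vec \<Rightarrow> ('w,'f) vec) \<Rightarrow> ('w,'f) vec \<Rightarrow> ('w,'f) vec \<Rightarrow> bool" where
  "pref_strict b Ev C z' z \<longleftrightarrow> acceptable b Ev C z \<and> acceptable b Ev C z' \<and> z \<noteq> z' \<and>
      C (\<lambda>e. max (z e) (z' e)) = z"

definition pref_le :: "('w,'f) vec \<Rightarrow> ('w \<times> 'f) set \<Rightarrow> (('w,'f) vec \<Rightarrow> ('w,'f) vec) \<Rightarrow> ('w,'f) vec \<Rightarrow> ('w,'f) vec \<Rightarrow> bool" where
  "pref_le b Ev C z' z \<longleftrightarrow> z' = z \<or> pref_strict b Ev C z' z"

definition interesting :: "('w,'f) vec \<Rightarrow> ('w \<times> 'f) set \<Rightarrow> (('w,'f) vec \<Rightarrow> ('w,'f) vec) \<Rightarrow> ('w,'f) vec \<Rightarrow> ('w \<times> 'f) \<Rightarrow> bool" where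
  "interesting b Ev C z e \<longleftrightarrow> e \<in> Ev \<and>
     (\<exists>z' \<in> Bset b Ev. z' e > z e \<and> (\<forall>e'. e' \<noteq> e \<longrightarrow> z' e' = z e') \<and> C z' e > z e)"

definition instance_ok :: "'w set \<Rightarrow> 'f set \<Rightarrow> ('w \<times> 'f) set \<Rightarrow> ('w,'f) vec \<Rightarrow>
    ('w \<Rightarrow> ('w,'f) vec \<Rightarrow> ('w,'f) vec) \<Rightarrow> ('f \<Rightarrow> ('w,'f) vec \<Rightarrow> ('w,'f) vec) \<Rightarrow> bool" where
  "instance_ok W F E b CW CF \<longleftrightarrow> finite W \<and> finite F \<and> E \<subseteq> W \<times> F \<and>
     (\<forall>e \<in> E. 0 \<le> b e) \<and>
     (\<forall>w \<in> W. choice_fun b (Ew E w) (CW w)) \<and> (\<forall>f \<in> F. choice_fun b (Ef E f) (CF f))"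

definition gmatching :: "'w set \<Rightarrow> 'f set \<Rightarrow> ('w \<times> 'f) set \<Rightarrow> ('w,'f) vec \<Rightarrow>
    ('w \<Rightarrow> ('w,'f) vec \<Rightarrow> ('w,'f) vec) \<Rightarrow> ('f \<Rightarrow> ('w,'f) vec \<Rightarrow> ('w,'f) vec) \<Rightarrow> ('w,'f) vec \<Rightarrow> bool" where
  "gmatching W F E b CW CF x \<longleftrightarrow>
     (\<forall>e. e \<notin> E \<longrightarrow> x e = 0) \<and> (\<forall>e \<in> E. 0 \<le> x e \<and> x e \<le> b e) \<and>
     (\<forall>w \<in> W. acceptable b (Ew E w) (CW w) (res (Ew E w) x)) \<and>
     (\<forall>f \<in> F. acceptable b (Ef E f) (CF f) (res (Ef E f) x))"

definition blocking :: "('w \<times> 'f) set \<Rightarrow> ('w,'f) vec \<Rightarrow>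
    ('w \<Rightarrow> ('w,'f) vec \<Rightarrow> ('w,'f) vec) \<Rightarrow> ('f \<Rightarrow> ('w,'f) vec \<Rightarrow> ('w,'f) vec) \<Rightarrow> ('w,'f) vec \<Rightarrow> ('w \<times> 'f) \<Rightarrow> bool" where
  "blocking E b CW CF x e \<longleftrightarrow> e \<in> E \<and>
     interesting b (Ew E (fst e)) (CW (fst e)) (res (Ew E (fst e)) x) e \<and>
     interesting b (Ef E (snd e)) (CF (snd e)) (res (Ef E (snd e)) x) e"

definition stable :: "'w set \<Rightarrow> 'f set \<Rightarrow> ('w \<times> 'f) set \<Rightarrow> ('w,'f) vec \<Rightarrow>
    ('w \<Rightarrow> ('w,'f) vec \<Rightarrow> ('w,'f) vec) \<Rightarrow> ('f \<Rightarrow> ('w,'f) vec \<Rightarrow> ('w,'f) vec) \<Rightarrow> ('w,'f) vec \<Rightarrow> bool" where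
  "stable W F E b CW CF x \<longleftrightarrow> gmatching W F E b CW CF x \<and> (\<nexists>e. blocking E b CW CF x e)"

definition precF :: "'f set \<Rightarrow> ('w \<times> 'f) set \<Rightarrow> ('w,'f) vec \<Rightarrow>
    ('f \<Rightarrow> ('w,'f) vec \<Rightarrow> ('w,'f) vec) \<Rightarrow> ('w,'f) vec \<Rightarrow> ('w,'f) vec \<Rightarrow> bool" where
  "precF F E b CF x y \<longleftrightarrow> x \<noteq> y \<and>
     (\<forall>f \<in> F. pref_le b (Ef E f) (CF f) (res (Ef E f) x) (res (Ef E f) y))"

definition xmax :: "'w set \<Rightarrow> 'f set \<Rightarrow> ('w \<times> 'f) set \<Rightarrow> ('w,'f) vec \<Rightarrow>
    ('w \<Rightarrow> ('w,'f) vec \<Rightarrow> ('w,'f) vec) \<Rightarrow> ('f \<Rightarrow> ('w,'f) vec \<Rightarrow> ('w,'f) vec) \<Rightarrow> ('w,'f) vec" where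
  "xmax W F E b CW CF = (THE m. stable W F E b CW CF m \<and>
      (\<forall>y. stable W F E b CW CF y \<longrightarrow> y = m \<or> precF F E b CF y m))"

definition Uplus :: "('w \<times> 'f) set \<Rightarrow> ('w,'f) vec \<Rightarrow> ('f \<Rightarrow> ('w,'f) vec \<Rightarrow> ('w,'f) vec) \<Rightarrow> ('w,'f) vec \<Rightarrow> ('w \<times> 'f) set" where
  "Uplus E b CF x = {e \<in> E. interesting b (Ef E (snd e)) (CF (snd e)) (res (Ef E (snd e)) x) e}"

definition Uminus :: "('w \<times> 'f) set \<Rightarrow> ('w,'f) vec \<Rightarrow> ('f \<Rightarrow> ('w,'f) vec \<Rightarrow> ('w,'f) vec) \<Rightarrow> ('w,'f) vec \<Rightarrow> ('w \<times> 'f) set" where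
  "Uminus E b CF x = {e \<in> E. x e > 0 \<and> \<not> interesting b (Ef E (snd e)) (CF (snd e)) (res (Ef E (snd e)) x) e}"

definition legal_f_pair :: "('w \<times> 'f) set \<Rightarrow> ('w,'f) vec \<Rightarrow> ('f \<Rightarrow> ('w,'f) vec \<Rightarrow> ('w,'f) vec) \<Rightarrow>
    ('w,'f) vec \<Rightarrow> ('w \<times> 'f) \<Rightarrow> ('w \<times> 'f) \<Rightarrow> bool" where
  "legal_f_pair E b CF x a c \<longleftrightarrow> a \<in> Uplus E b CF x \<and> c \<in> Ef E (snd a) - {a} \<and>
     CF (snd a) (\<lambda>e. res (Ef E (snd a)) x e + unitv a e) =
       (\<lambda>e. res (Ef E (snd a)) x e + unitv a e - unitv c e)"

definition legal_w_pair :: "('w \<times> 'f) set \<Rightarrow> ('w,'f) vec \<Rightarrow> ('w \<Rightarrow> ('w,'f) vec \<Rightarrow> ('w,'f) vec) \<Rightarrow>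
    ('f \<Rightarrow> ('w,'f) vec \<Rightarrow> ('w,'f) vec) \<Rightarrow> ('w,'f) vec \<Rightarrow> ('w \<times> 'f) \<Rightarrow> ('w \<times> 'f) \<Rightarrow> bool" where
  "legal_w_pair E b CW CF x c a \<longleftrightarrow> c \<in> Uminus E b CF x \<and> a \<in> Uplus E b CF x \<and> fst c = fst a \<and>
     acceptable b (Ew E (fst c)) (CW (fst c)) (\<lambda>e. res (Ew E (fst c)) x e + unitv a e - unitv c e)"

definition essential_w_pair :: "('w \<times> 'f) set \<Rightarrow> ('w,'f) vec \<Rightarrow> ('w \<Rightarrow> ('w,'f) vec \<Rightarrow> ('w,'f) vec) \<Rightarrow>
    ('f \<Rightarrow> ('w,'f) vec \<Rightarrow> ('w,'f) vec) \<Rightarrow> ('w,'f) vec \<Rightarrow> ('w \<times> 'f) \<Rightarrow> ('w \<times> 'f) \<Rightarrow> bool" where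
  "essential_w_pair E b CW CF x c a \<longleftrightarrow> legal_w_pair E b CW CF x c a \<and>
     \<not> (\<exists>d \<in> (Uplus E b CF x \<inter> Ew E (fst c)) - {a}.
          interesting b (Ew E (fst c)) (CW (fst c)) (\<lambda>e. res (Ew E (fst c)) x e + unitv a e - unitv c e) d)"

datatype ('w,'f) node = WN "'w \<times> 'f" | FN "'w \<times> 'f"

definition Dnodes :: "('w \<times> 'f) set \<Rightarrow> ('w,'f) vec \<Rightarrow> ('f \<Rightarrow> ('w,'f) vec \<Rightarrow> ('w,'f) vec) \<Rightarrow> ('w,'f) vec \<Rightarrow> ('w,'f) node set" where
  "Dnodes E b CF x = WN ` (Uplus E b CF x \<union> Uminus E b CF x) \<union> FN ` (Uplus E b CF x \<union> Uminus E b CF x)"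

definition Darcs :: "('w \<times> 'f) set \<Rightarrow> ('w,'f) vec \<Rightarrow> ('w \<Rightarrow> ('w,'f) vec \<Rightarrow> ('w,'f) vec) \<Rightarrow>
    ('f \<Rightarrow> ('w,'f) vec \<Rightarrow> ('w,'f) vec) \<Rightarrow> ('w,'f) vec \<Rightarrow> (('w,'f) node \<times> ('w,'f) node) set" where
  "Darcs E b CW CF x =
     {(WN a, FN a) | a. a \<in> Uplus E b CF x} \<union>
     {(FN c, WN c) | c. c \<in> Uminus E b CF x} \<union>
     {(FN a, FN c) | a c. legal_f_pair E b CF x a c} \<union>
     {(WN c, WN a) | c a. essential_w_pair E b CW CF x c a}"

definition del_step :: "('n \<times> 'n) set \<Rightarrow> 'n set \<Rightarrow> 'n set" where
  "del_step A S = {v \<in> S. \<exists>u \<in> S. (u, v) \<in> A}"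

definition remainder :: "('n \<times> 'n) set \<Rightarrow> 'n set \<Rightarrow> 'n set" where
  "remainder A V = (\<Inter>n. (del_step A ^^ n) V)"

definition dcycle :: "('n \<times> 'n) set \<Rightarrow> 'n set \<Rightarrow> 'n list \<Rightarrow> bool" where
  "dcycle A S vs \<longleftrightarrow> vs \<noteq> [] \<and> distinct vs \<and> set vs \<subseteq> S \<and>
     (\<forall>i < length vs. (vs ! i, vs ! ((i + 1) mod length vs)) \<in> A)"

definition chiR :: "('w \<times> 'f) set \<Rightarrow> ('w,'f) vec \<Rightarrow> ('f \<Rightarrow> ('w,'f) vec \<Rightarrow> ('w,'f) vec) \<Rightarrow> ('w,'f) vec \<Rightarrow>
    ('w,'f) node set \<Rightarrow> ('w,'f) vec" where
  "chiR E b CF x S = (\<lambda>e. if WN e \<in> S \<or> FN e \<in> S then (if e \<in> Uplus E b CF x then 1 else -1) else 0)"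

text \<open>\<R>(x), each rotation represented by its vector \<chi>^R\<close>
definition rotations :: "('w \<times> 'f) set \<Rightarrow> ('w,'f) vec \<Rightarrow> ('w \<Rightarrow> ('w,'f) vec \<Rightarrow> ('w,'f) vec) \<Rightarrow>
    ('f \<Rightarrow> ('w,'f) vec \<Rightarrow> ('w,'f) vec) \<Rightarrow> ('w,'f) vec \<Rightarrow> ('w,'f) vec set" where
  "rotations E b CW CF x =
     {chiR E b CF x (set vs) | vs.
        dcycle (Darcs E b CW CF x) (remainder (Darcs E b CW CF x) (Dnodes E b CF x)) vs}"

end

theory Submission
  imports Defs
begin

lemma remainder_sub: "remainder A V \<subseteq> V"
proof -
  have "(\<Inter>n. (del_step A ^^ n) V) \<subseteq> (del_step A ^^ 0) V" by (rule INT_lower) simp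
  thus ?thesis unfolding remainder_def by simp
qed

lemma mod_suc_cases: "i < (n::nat) \<Longrightarrow> (i + 1) mod n = (if i + 1 = n then 0 else i + 1)"
  by auto

lemma mod_suc_inj: "i < (n::nat) \<Longrightarrow> j < n \<Longrightarrow> (i + 1) mod n = (j + 1) mod n \<Longrightarrow> i = j"
  using mod_suc_cases[of i n] mod_suc_cases[of j n] by (auto split: if_splits)

lemma cycle_sc:
  assumes "dcycle A S vs"
  shows "\<exists>sc. inj_on sc (set vs) \<and> (\<forall>v\<in>set vs. sc v \<in> set vs \<and> (v, sc v) \<in> A)"
proof -
  let ?n = "length vs"
  have ne: "vs \<noteq> []" and di: "distinct vs" and arc: "\<forall>i<?n. (vs ! i, vs ! ((i + 1) mod ?n)) \<in> A"
    using assms unfolding dcycle_def by auto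
  have np: "0 < ?n" using ne by simp
  define idx where "idx v = (SOME i. i < ?n \<and> vs ! i = v)" for v
  have idx: "idx v < ?n \<and> vs ! idx v = v" if "v \<in> set vs" for v
    unfolding idx_def by (rule someI_ex) (use that in \<open>auto simp: in_set_conv_nth\<close>)
  define sc where "sc v = vs ! ((idx v + 1) mod ?n)" for v
  have "inj_on sc (set vs)"
  proof (rule inj_onI)
    fix u v assume u: "u \<in> set vs" and v: "v \<in> set vs" and e: "sc u = sc v"
    have "(idx u + 1) mod ?n = (idx v + 1) mod ?n"
      using e nth_eq_iff_index_eq[OF di, of "(idx u + 1) mod ?n" "(idx v + 1) mod ?n"] np
      unfolding sc_def by simp
    hence "idx u = idx v" using idx[OF u] idx[OF v] mod_suc_inj by blast
    thus "u = v" using idx[OF u] idx[OF v] by metis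
  qed
  moreover have "\<forall>v\<in>set vs. sc v \<in> set vs \<and> (v, sc v) \<in> A"
  proof
    fix v assume v: "v \<in> set vs"
    have "sc v \<in> set vs" unfolding sc_def using np by simp
    moreover have "(v, sc v) \<in> A" using arc idx[OF v] unfolding sc_def by metis
    ultimately show "sc v \<in> set vs \<and> (v, sc v) \<in> A" by blast
  qed
  ultimately show ?thesis by blast
qed

lemma Bset_iff: "z \<in> Bset b Ev \<longleftrightarrow> (\<forall>e\<in>Ev. 0 \<le> z e \<and> z e \<le> b e) \<and> (\<forall>e. e \<notin> Ev \<longrightarrow> z e = 0)"
  unfolding Bset_def by auto

lemma BsetD: "z \<in> Bset b Ev \<Longrightarrow> e \<in> Ev \<Longrightarrow> 0 \<le> z e \<and> z e \<le> b e"
  and BsetD0: "z \<in> Bset b Ev \<Longrightarrow> e \<notin> Ev \<Longrightarrow> z e = 0"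
  unfolding Bset_def mem_Collect_eq by blast+

lemma BsetI: "(\<And>e. e \<in> Ev \<Longrightarrow> 0 \<le> z e \<and> z e \<le> b e) \<Longrightarrow> (\<And>e. e \<notin> Ev \<Longrightarrow> z e = 0) \<Longrightarrow> z \<in> Bset b Ev"
  unfolding Bset_def by auto

context
  fixes b :: "('w,'f) vec" and Ev :: "('w \<times> 'f) set" and C :: "('w,'f) vec \<Rightarrow> ('w,'f) vec"
  assumes cf: "choice_fun b Ev C"
begin

lemma cfB: "z \<in> Bset b Ev \<Longrightarrow> C z \<in> Bset b Ev"
  using cf unfolding choice_fun_def by blast

lemma cfle: "z \<in> Bset b Ev \<Longrightarrow> C z e \<le> z e"
  using cf unfolding choice_fun_def le_fun_def by blast

lemma cfA1: "z \<in> Bset b Ev \<Longrightarrow> z' \<in> Bset b Ev \<Longrightarrow> (\<And>e. z' e \<le> z e) \<Longrightarrow> (\<And>e. C z e \<le> z' e) \<Longrightarrow> C z' = C z"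
  using cf unfolding choice_fun_def le_fun_def by blast

lemma cfA2: "z \<in> Bset b Ev \<Longrightarrow> z' \<in> Bset b Ev \<Longrightarrow> (\<And>e. z' e \<le> z e) \<Longrightarrow> min (C z e) (z' e) \<le> C z' e"
proof -
  assume a: "z \<in> Bset b Ev" "z' \<in> Bset b Ev" "\<And>e. z' e \<le> z e"
  have "z' \<le> z" using a(3) by (simp add: le_fun_def)
  hence "(\<lambda>e. min (C z e) (z' e)) \<le> C z'" using cf a(1,2) unfolding choice_fun_def by blast
  thus ?thesis unfolding le_fun_def by blast
qed

lemma cfA3: "z \<in> Bset b Ev \<Longrightarrow> z' \<in> Bset b Ev \<Longrightarrow> (\<And>e. z' e \<le> z e) \<Longrightarrow> vsize Ev (C z') \<le> vsize Ev (C z)"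
proof -
  assume a: "z \<in> Bset b Ev" "z' \<in> Bset b Ev" "\<And>e. z' e \<le> z e"
  have "z' \<le> z" using a(3) by (simp add: le_fun_def)
  thus ?thesis using cf a(1,2) unfolding choice_fun_def by blast
qed

lemma interesting_iff:
  assumes z: "z \<in> Bset b Ev"
  shows "interesting b Ev C z e \<longleftrightarrow> e \<in> Ev \<and> z e + 1 \<le> b e \<and> C (\<lambda>d. z d + unitv e d) e > z e"
proof
  assume "interesting b Ev C z e"
  then obtain z' where e: "e \<in> Ev" and z': "z' \<in> Bset b Ev" "z' e > z e" "\<forall>e'. e' \<noteq> e \<longrightarrow> z' e' = z e'" "C z' e > z e"
    unfolding interesting_def by blast
  let ?y = "\<lambda>d. z d + unitv e d"
  have ble: "z e + 1 \<le> b e" using BsetD[OF z' (1) e] z'(2) by simp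
  have yB: "?y \<in> Bset b Ev"
    using z e ble by (auto intro!: BsetI simp: unitv_def dest: BsetD BsetD0)
  have "min (C z' e) (?y e) \<le> C ?y e"
    by (rule cfA2[OF z'(1) yB]) (use z'(2,3) in \<open>auto simp: unitv_def\<close>)
  hence "C ?y e > z e" using z'(4) by (auto simp: unitv_def)
  thus "e \<in> Ev \<and> z e + 1 \<le> b e \<and> C ?y e > z e" using e ble by blast
next
  let ?y = "\<lambda>d. z d + unitv e d"
  assume h: "e \<in> Ev \<and> z e + 1 \<le> b e \<and> C ?y e > z e"
  have yB: "?y \<in> Bset b Ev"
    using z h by (auto intro!: BsetI simp: unitv_def dest: BsetD BsetD0)
  show "interesting b Ev C z e" unfolding interesting_def
    using h yB by (auto simp: unitv_def intro!: bexI[of _ ?y])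
qed

lemma noint_add:
  assumes u: "u \<in> Bset b Ev" "C u = u" and v: "v \<in> Bset b Ev" and uv: "\<And>e. u e \<le> v e"
    and ni: "\<And>e. u e < v e \<Longrightarrow> \<not> interesting b Ev C u e"
  shows "C v = u"
proof -
  have le: "C v e \<le> u e" for e
  proof (cases "u e < v e")
    case False
    thus ?thesis using cfle[OF v, of e] uv[of e] by simp
  next
    case True
    have eE: "e \<in> Ev" proof (rule ccontr)
      assume "e \<notin> Ev" thus False using True BsetD0[OF u(1)] BsetD0[OF v] by (metis less_irrefl)
    qed
    let ?z = "\<lambda>d. if d = e then v e else u d"
    have zB: "?z \<in> Bset b Ev" using u(1) v eE by (auto intro!: BsetI dest: BsetD BsetD0)
    have "min (C v e) (?z e) \<le> C ?z e" by (rule cfA2[OF v zB]) (use uv in auto)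
    hence "C v e \<le> C ?z e" using cfle[OF v, of e] by simp
    moreover have "\<not> C ?z e > u e"
      using ni[OF True] eE zB True unfolding interesting_def by auto
    ultimately show ?thesis by simp
  qed
  have "C u = C v" by (rule cfA1[OF v u(1) uv le])
  thus ?thesis using u(2) by simp
qed

end

lemma sum_ind: "finite Ev \<Longrightarrow> A \<subseteq> Ev \<Longrightarrow> (\<Sum>e\<in>Ev. (if e \<in> A then 1 else 0)::int) = int (card A)"
proof -
  assume "finite Ev" "A \<subseteq> Ev"
  hence "(\<Sum>e\<in>Ev. (if e \<in> A then 1 else 0)::int) = (\<Sum>e\<in>A. 1)"
    by (simp add: sum.If_cases Int_absorb1)
  thus ?thesis by simp
qed

lemma Bset_unit: "z \<in> Bset b Ev \<Longrightarrow> a \<in> Ev \<Longrightarrow> z a + 1 \<le> b a \<Longrightarrow> (\<lambda>d. z d + unitv a d) \<in> Bset b Ev"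
proof (rule BsetI)
  fix e assume "z \<in> Bset b Ev" "a \<in> Ev" "z a + 1 \<le> b a" "e \<in> Ev"
  thus "0 \<le> z e + unitv a e \<and> z e + unitv a e \<le> b e"
    using BsetD[of z b Ev e] unfolding unitv_def by (cases "e = a") simp_all
next
  fix e assume "z \<in> Bset b Ev" "a \<in> Ev" "e \<notin> Ev"
  thus "z e + unitv a e = 0" using BsetD0[of z b Ev e] unfolding unitv_def by (cases "e = a") simp_all
qed

lemma vsize_nonneg: "z \<in> Bset b Ev \<Longrightarrow> vsize Ev z = sum z Ev"
  unfolding vsize_def proof (rule sum.cong)
  fix e assume "z \<in> Bset b Ev" "e \<in> Ev"
  thus "\<bar>z e\<bar> = z e" using BsetD[of z b Ev e] by simp
qed simp

lemma sum_le_eq: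
  assumes "finite Ev" "\<And>e. e \<in> Ev \<Longrightarrow> f e \<le> g e" "sum g Ev \<le> sum f Ev"
  shows "\<And>e. e \<in> Ev \<Longrightarrow> f e = (g e :: int)"
proof -
  have nn: "\<And>e. e \<in> Ev \<Longrightarrow> 0 \<le> g e - f e" using assms(2) by simp
  have "sum (\<lambda>e. g e - f e) Ev = sum g Ev - sum f Ev" by (rule sum_subtractf)
  moreover have "sum (\<lambda>e. g e - f e) Ev \<ge> 0" using nn by (simp add: sum_nonneg)
  ultimately have "sum (\<lambda>e. g e - f e) Ev = 0" using assms(3) by linarith
  hence "\<forall>e\<in>Ev. g e - f e = 0" using sum_nonneg_eq_0_iff[OF assms(1), of "\<lambda>e. g e - f e"] nn by blast
  thus "\<And>e. e \<in> Ev \<Longrightarrow> f e = g e" by auto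
qed

context
  fixes b :: "('w,'f) vec" and Ev :: "('w \<times> 'f) set" and C :: "('w,'f) vec \<Rightarrow> ('w,'f) vec"
  assumes cf: "choice_fun b Ev C"
begin

lemma fside:
  fixes x :: "('w,'f) vec" and A Cs :: "('w \<times> 'f) set"
  defines "y \<equiv> \<lambda>e. x e + (if e \<in> A then 1 else 0)"
  defines "x' \<equiv> \<lambda>e. x e + (if e \<in> A then 1 else 0) - (if e \<in> Cs then 1 else 0)"
  assumes fin: "finite Ev" and x: "x \<in> Bset b Ev" "C x = x"
    and sub: "A \<subseteq> Ev" "Cs \<subseteq> Ev" "A \<inter> Cs = {}"
    and Ab: "\<forall>a\<in>A. x a + 1 \<le> b a"
    and pair: "\<forall>c\<in>Cs. \<exists>a\<in>A. C (\<lambda>e. x e + unitv a e) = (\<lambda>e. x e + unitv a e - unitv c e)"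
    and card: "card A \<le> card Cs"
  shows "C y = x'"
proof -
  have yB: "y \<in> Bset b Ev" unfolding y_def
  proof (rule BsetI)
    fix e assume "e \<in> Ev" thus "0 \<le> x e + (if e \<in> A then 1 else 0) \<and> x e + (if e \<in> A then 1 else 0) \<le> b e"
      using BsetD[OF x(1), of e] Ab by (cases "e \<in> A") auto
  next
    fix e assume "e \<notin> Ev" thus "x e + (if e \<in> A then 1 else 0) = 0" using BsetD0[OF x(1), of e] sub by auto
  qed
  have xy: "x e \<le> y e" for e unfolding y_def by simp
  have le: "C y e \<le> x' e" for e
  proof (cases "e \<in> Cs")
    case True
    then obtain a where a: "a \<in> A" "C (\<lambda>d. x d + unitv a d) = (\<lambda>d. x d + unitv a d - unitv e d)"
      using pair by blast
    have ae: "a \<noteq> e" "e \<notin> A" using a(1) True sub(3) by auto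
    let ?xa = "\<lambda>d. x d + unitv a d"
    have xaB: "?xa \<in> Bset b Ev" using Bset_unit[OF x(1)] a(1) sub Ab by blast
    have "min (C y e) (?xa e) \<le> C ?xa e"
      by (rule cfA2[OF cf yB xaB]) (use a(1) in \<open>auto simp: y_def unitv_def\<close>)
    hence "min (C y e) (x e) \<le> x e - 1" using a(2) ae by (simp add: unitv_def)
    hence "C y e \<le> x e - 1" by linarith
    thus ?thesis using ae True by (simp add: x'_def)
  next
    case False
    thus ?thesis using cfle[OF cf yB, of e] by (simp add: x'_def y_def)
  qed
  have "vsize Ev (C x) \<le> vsize Ev (C y)" by (rule cfA3[OF cf yB x(1) xy])
  hence s1: "sum x Ev \<le> sum (C y) Ev" using vsize_nonneg[OF cfB[OF cf yB]] vsize_nonneg[OF x(1)] x(2) by simp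
  have "sum x' Ev = sum x Ev + int (card A) - int (card Cs)"
    unfolding x'_def using sum_ind[OF fin sub(1)] sum_ind[OF fin sub(2)]
    by (simp add: sum.distrib sum_subtractf)
  hence s2: "sum x' Ev \<le> sum (C y) Ev" using s1 card by linarith
  have eq: "C y e = x' e" if "e \<in> Ev" for e using sum_le_eq[OF fin le s2] that by blast
  show ?thesis
  proof
    fix e show "C y e = x' e"
    proof (cases "e \<in> Ev")
      case True thus ?thesis using eq by blast
    next
      case False
      thus ?thesis using BsetD0[OF cfB[OF cf yB] False] BsetD0[OF x(1) False] sub
        by (auto simp: x'_def)
    qed
  qed
qed

end

context
  fixes b :: "('w,'f) vec" and Ev :: "('w \<times> 'f) set" and C :: "('w,'f) vec \<Rightarrow> ('w,'f) vec"
  assumes cf: "choice_fun b Ev C"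
begin

lemma fside_cor:
  fixes x :: "('w,'f) vec" and A Cs :: "('w \<times> 'f) set"
  defines "y \<equiv> \<lambda>e. x e + (if e \<in> A then 1 else 0)"
  defines "x' \<equiv> \<lambda>e. x e + (if e \<in> A then 1 else 0) - (if e \<in> Cs then 1 else 0)"
  assumes fin: "finite Ev" and x: "x \<in> Bset b Ev" "C x = x"
    and sub: "A \<subseteq> Ev" "Cs \<subseteq> Ev" "A \<inter> Cs = {}"
    and Ab: "\<forall>a\<in>A. x a + 1 \<le> b a"
    and pair: "\<forall>c\<in>Cs. \<exists>a\<in>A. C (\<lambda>e. x e + unitv a e) = (\<lambda>e. x e + unitv a e - unitv c e)"
    and card: "card A \<le> card Cs"
  shows "x' \<in> Bset b Ev \<and> C x' = x' \<and> C (\<lambda>e. max (x e) (x' e)) = x' \<and> y \<in> Bset b Ev \<and> C y = x'"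
proof -
  have Cy: "C y = x'" unfolding y_def x'_def by (rule fside[OF cf fin x sub Ab pair card])
  have yB: "y \<in> Bset b Ev" unfolding y_def
  proof (rule BsetI)
    fix e assume "e \<in> Ev" thus "0 \<le> x e + (if e \<in> A then 1 else 0) \<and> x e + (if e \<in> A then 1 else 0) \<le> b e"
      using BsetD[OF x(1), of e] Ab by (cases "e \<in> A") auto
  next
    fix e assume "e \<notin> Ev" thus "x e + (if e \<in> A then 1 else 0) = 0" using BsetD0[OF x(1), of e] sub by auto
  qed
  have x'B: "x' \<in> Bset b Ev" using cfB[OF cf yB] Cy by simp
  have "C x' = C y"
  proof (rule cfA1[OF cf yB x'B])
    fix e show "x' e \<le> y e" by (simp add: x'_def y_def)
  next
    fix e show "C y e \<le> x' e" using Cy by simp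
  qed
  hence Cx': "C x' = x'" using Cy by simp
  have "(\<lambda>e. max (x e) (x' e)) = y" using sub(3) by (auto simp: x'_def y_def fun_eq_iff)
  thus ?thesis using Cy Cx' x'B yB by simp
qed

lemma fside_block:
  fixes x :: "('w,'f) vec" and A Cs :: "('w \<times> 'f) set"
  defines "x' \<equiv> \<lambda>e. x e + (if e \<in> A then 1 else 0) - (if e \<in> Cs then 1 else 0)"
  assumes fin: "finite Ev" and x: "x \<in> Bset b Ev" "C x = x"
    and sub: "A \<subseteq> Ev" "Cs \<subseteq> Ev" "A \<inter> Cs = {}"
    and Ab: "\<forall>a\<in>A. x a + 1 \<le> b a"
    and pair: "\<forall>c\<in>Cs. \<exists>a\<in>A. C (\<lambda>e. x e + unitv a e) = (\<lambda>e. x e + unitv a e - unitv c e)"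
    and card: "card A \<le> card Cs"
    and int: "interesting b Ev C x' e"
  shows "e \<in> A \<or> interesting b Ev C x e"
proof -
  define y where "y \<equiv> \<lambda>e. x e + (if e \<in> A then 1 else 0)"
  have cor: "x' \<in> Bset b Ev \<and> C x' = x' \<and> C (\<lambda>e. max (x e) (x' e)) = x' \<and> y \<in> Bset b Ev \<and> C y = x'"
    unfolding x'_def y_def by (rule fside_cor[OF fin x sub Ab pair card])
  hence x'B: "x' \<in> Bset b Ev" and yB: "y \<in> Bset b Ev" and Cy: "C y = x'" by auto
  let ?x1 = "\<lambda>d. x' d + unitv e d"
  have ie: "e \<in> Ev" "x' e + 1 \<le> b e" "C ?x1 e > x' e" using int interesting_iff[OF cf x'B] by blast+
  have x1B: "?x1 \<in> Bset b Ev" by (rule Bset_unit[OF x'B ie(1,2)])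
  show ?thesis
  proof (cases "e \<in> A")
    case True thus ?thesis by blast
  next
    case nA: False
    show ?thesis
    proof (cases "e \<in> Cs")
      case True
      have "C ?x1 = C y"
        by (rule cfA1[OF cf yB x1B]) (use True nA sub(3) Cy in \<open>auto simp: x'_def y_def unitv_def\<close>)
      hence "C ?x1 e = x' e" using Cy by simp
      thus ?thesis using ie(3) by simp
    next
      case nC: False
      have ex: "x' e = x e" "y e = x e" using nA nC by (auto simp: x'_def y_def)
      let ?y1 = "\<lambda>d. y d + unitv e d"
      have y1B: "?y1 \<in> Bset b Ev" by (rule Bset_unit[OF yB ie(1)]) (use ex ie(2) in simp)
      have up: "C ?y1 d \<le> ?x1 d" for d
      proof (cases "d = e")
        case True thus ?thesis using cfle[OF cf y1B, of d] ex by (simp add: unitv_def)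
      next
        case False
        have "min (C ?y1 d) (y d) \<le> C y d" by (rule cfA2[OF cf y1B yB]) (simp add: unitv_def)
        moreover have "C ?y1 d \<le> y d" using cfle[OF cf y1B, of d] False by (simp add: unitv_def)
        ultimately show ?thesis using Cy False by (simp add: unitv_def)
      qed
      have "C ?x1 = C ?y1"
        by (rule cfA1[OF cf y1B x1B]) (use up nA nC sub(3) in \<open>auto simp: x'_def y_def unitv_def\<close>)
      hence g: "C ?y1 e > x e" using ie(3) ex by simp
      let ?xe = "\<lambda>d. x d + unitv e d"
      have xeB: "?xe \<in> Bset b Ev" by (rule Bset_unit[OF x(1) ie(1)]) (use ex ie(2) in simp)
      have "min (C ?y1 e) (?xe e) \<le> C ?xe e" by (rule cfA2[OF cf y1B xeB]) (simp add: y_def unitv_def)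
      hence "C ?xe e > x e" using g by (simp add: unitv_def)
      hence "interesting b Ev C x e" using interesting_iff[OF cf x(1)] ie ex by simp
      thus ?thesis by blast
    qed
  qed
qed

end

context
  fixes b :: "('w,'f) vec" and Ev :: "('w \<times> 'f) set" and C :: "('w,'f) vec \<Rightarrow> ('w,'f) vec"
  assumes cf: "choice_fun b Ev C"
begin

lemma wside:
  fixes x :: "('w,'f) vec" and A Cs U :: "('w \<times> 'f) set"
  defines "x' \<equiv> \<lambda>e. x e + (if e \<in> A then 1 else 0) - (if e \<in> Cs then 1 else 0)"
  assumes fin: "finite Ev" and x: "x \<in> Bset b Ev" "C x = x"
    and sub: "A \<subseteq> U" "U \<subseteq> Ev" "Cs \<subseteq> Ev" "U \<inter> Cs = {}"
    and Ab: "\<forall>a\<in>A. x a + 1 \<le> b a"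
    and Cpos: "\<forall>c\<in>Cs. 1 \<le> x c"
    and niU: "\<forall>d\<in>U. \<not> interesting b Ev C x d"
    and pair: "\<forall>a\<in>A. \<exists>c\<in>Cs. (\<lambda>e. x e + unitv a e - unitv c e) \<in> Bset b Ev \<and>
                 C (\<lambda>e. x e + unitv a e - unitv c e) = (\<lambda>e. x e + unitv a e - unitv c e) \<and>
                 (\<forall>d\<in>U - {a}. \<not> interesting b Ev C (\<lambda>e. x e + unitv a e - unitv c e) d)"
    and card: "card Cs \<le> card A"
  shows "x' \<in> Bset b Ev \<and> C x' = x' \<and> (\<forall>e\<in>U. \<not> interesting b Ev C x' e)"
proof -
  have AC: "A \<inter> Cs = {}" using sub by blast
  have AE: "A \<subseteq> Ev" using sub by blast
  have xB: "e \<in> Ev \<Longrightarrow> 0 \<le> x e \<and> x e \<le> b e" for e using BsetD[OF x(1)] by blast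
  have x0: "e \<notin> Ev \<Longrightarrow> x e = 0" for e using BsetD0[OF x(1)] by blast
  have x'B: "x' \<in> Bset b Ev"
  proof (rule BsetI)
    fix e assume e: "e \<in> Ev"
    show "0 \<le> x' e \<and> x' e \<le> b e"
    proof (cases "e \<in> A")
      case True thus ?thesis using AC Ab xB[OF e] by (auto simp: x'_def)
    next
      case False thus ?thesis using Cpos xB[OF e] by (cases "e \<in> Cs") (auto simp: x'_def)
    qed
  next
    fix e assume "e \<notin> Ev" thus "x' e = 0" using x0 AE sub(3) by (auto simp: x'_def)
  qed
  have keyZ: "C Z = (\<lambda>e. x e + unitv a e - unitv c e)"
    if a: "a \<in> A" and c: "c \<in> Cs"
      and uB: "(\<lambda>e. x e + unitv a e - unitv c e) \<in> Bset b Ev"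
      and uC: "C (\<lambda>e. x e + unitv a e - unitv c e) = (\<lambda>e. x e + unitv a e - unitv c e)"
      and uni: "\<forall>d\<in>U - {a}. \<not> interesting b Ev C (\<lambda>e. x e + unitv a e - unitv c e) d"
      and ZB: "Z \<in> Bset b Ev"
      and Zge: "\<And>e. x e + unitv a e - unitv c e \<le> Z e"
      and Zsupp: "\<And>e. x e + unitv a e - unitv c e < Z e \<Longrightarrow> e \<in> U - {a}"
    for a c Z
    by (rule noint_add[OF cf uB uC ZB Zge]) (use Zsupp uni in blast)
  show ?thesis
  proof (cases "A = {}")
    case True
    hence "Cs = {}" using card fin sub(3) finite_subset[OF sub(3) fin] by auto
    hence "x' = x" using True by (simp add: x'_def)
    thus ?thesis using x niU by simp
  next
    case Ane: False
    then obtain a0 where a0: "a0 \<in> A" by blast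
    have Cx'ge: "x' d \<le> C x' d" for d
    proof (cases "d \<in> A")
      case True
      obtain c where c: "c \<in> Cs" and pc: "(\<lambda>e. x e + unitv d e - unitv c e) \<in> Bset b Ev \<and>
                 C (\<lambda>e. x e + unitv d e - unitv c e) = (\<lambda>e. x e + unitv d e - unitv c e) \<and>
                 (\<forall>d'\<in>U - {d}. \<not> interesting b Ev C (\<lambda>e. x e + unitv d e - unitv c e) d')"
        using pair True by blast
      define Z where "Z = (\<lambda>e. x e + (if e \<in> A then 1 else 0) - unitv c e)"
      have cA: "c \<notin> A" "c \<noteq> d" using c AC True by auto
      have ZB: "Z \<in> Bset b Ev"
      proof (rule BsetI)
        fix e assume e: "e \<in> Ev" show "0 \<le> Z e \<and> Z e \<le> b e"
          using xB[OF e] Ab Cpos c cA by (cases "e \<in> A"; cases "e = c") (auto simp: Z_def unitv_def)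
      next
        fix e assume "e \<notin> Ev" thus "Z e = 0" using x0 AE c sub(3) by (auto simp: Z_def unitv_def)
      qed
      have CZ: "C Z = (\<lambda>e. x e + unitv d e - unitv c e)"
        by (rule keyZ[OF True c _ _ _ ZB]) (use pc cA True sub(1) in \<open>auto simp: Z_def unitv_def split: if_splits\<close>)
      have x'Z: "x' e \<le> Z e" for e using c by (auto simp: x'_def Z_def unitv_def)
      have "min (C Z d) (x' d) \<le> C x' d" by (rule cfA2[OF cf ZB x'B x'Z])
      thus ?thesis using CZ cA True by (simp add: x'_def unitv_def)
    next
      case False
      obtain c where c: "c \<in> Cs" and pc: "(\<lambda>e. x e + unitv a0 e - unitv c e) \<in> Bset b Ev \<and>
                 C (\<lambda>e. x e + unitv a0 e - unitv c e) = (\<lambda>e. x e + unitv a0 e - unitv c e) \<and>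
                 (\<forall>d'\<in>U - {a0}. \<not> interesting b Ev C (\<lambda>e. x e + unitv a0 e - unitv c e) d')"
        using pair a0 by blast
      define Z where "Z = (\<lambda>e. x e + (if e \<in> A then 1 else 0) - unitv c e)"
      have cA: "c \<notin> A" "c \<noteq> a0" using c AC a0 by auto
      have ZB: "Z \<in> Bset b Ev"
      proof (rule BsetI)
        fix e assume e: "e \<in> Ev" show "0 \<le> Z e \<and> Z e \<le> b e"
          using xB[OF e] Ab Cpos c cA by (cases "e \<in> A"; cases "e = c") (auto simp: Z_def unitv_def)
      next
        fix e assume "e \<notin> Ev" thus "Z e = 0" using x0 AE c sub(3) by (auto simp: Z_def unitv_def)
      qed
      have CZ: "C Z = (\<lambda>e. x e + unitv a0 e - unitv c e)"
        by (rule keyZ[OF a0 c _ _ _ ZB]) (use pc cA a0 sub(1) in \<open>auto simp: Z_def unitv_def split: if_splits\<close>)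
      have x'Z: "x' e \<le> Z e" for e using c by (auto simp: x'_def Z_def unitv_def)
      have "min (C Z d) (x' d) \<le> C x' d" by (rule cfA2[OF cf ZB x'B x'Z])
      thus ?thesis using CZ cA False a0 c by (auto simp: x'_def unitv_def)
    qed
    have Cx': "C x' = x'"
    proof
      fix d show "C x' d = x' d" using Cx'ge[of d] cfle[OF cf x'B, of d] by simp
    qed
    have noint: "\<not> interesting b Ev C x' e0" if e0: "e0 \<in> U" for e0
    proof
      assume int: "interesting b Ev C x' e0"
      let ?x1 = "\<lambda>d. x' d + unitv e0 d"
      have ie: "e0 \<in> Ev" "x' e0 + 1 \<le> b e0" "C ?x1 e0 > x' e0" using int interesting_iff[OF cf x'B] by blast+
      have x1B: "?x1 \<in> Bset b Ev" by (rule Bset_unit[OF x'B ie(1,2)])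
      have e0C: "e0 \<notin> Cs" using e0 sub(4) by blast
      define Y where "Y = (\<lambda>e. x e + (if e \<in> A then 1 else 0) + unitv e0 e)"
      have YB: "Y \<in> Bset b Ev"
      proof (rule BsetI)
        fix e assume e: "e \<in> Ev" show "0 \<le> Y e \<and> Y e \<le> b e"
          using xB[OF e] Ab ie(2) e0C by (cases "e \<in> A"; cases "e = e0") (auto simp: Y_def unitv_def x'_def)
      next
        fix e assume "e \<notin> Ev" thus "Y e = 0" using x0 AE ie(1) by (auto simp: Y_def unitv_def)
      qed
      have CY: "C Y = x"
        by (rule noint_add[OF cf x(1) x(2) YB]) (use niU sub(1) e0 in \<open>auto simp: Y_def unitv_def split: if_splits\<close>)
      have x1Y: "?x1 e \<le> Y e" for e by (auto simp: x'_def Y_def unitv_def)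
      have Lge: "x' d + unitv e0 d \<le> C ?x1 d" for d
      proof (cases "d = e0")
        case True thus ?thesis using ie(3) by (simp add: unitv_def)
      next
        case dne: False
        show ?thesis
        proof (cases "d \<in> A")
          case False
          have "min (C Y d) (?x1 d) \<le> C ?x1 d" by (rule cfA2[OF cf YB x1B x1Y])
          thus ?thesis using CY dne False by (auto simp: x'_def unitv_def)
        next
          case True
          obtain c where c: "c \<in> Cs" and pc: "(\<lambda>e. x e + unitv d e - unitv c e) \<in> Bset b Ev \<and>
                 C (\<lambda>e. x e + unitv d e - unitv c e) = (\<lambda>e. x e + unitv d e - unitv c e) \<and>
                 (\<forall>d'\<in>U - {d}. \<not> interesting b Ev C (\<lambda>e. x e + unitv d e - unitv c e) d')"
            using pair True by blast
          define Z where "Z = (\<lambda>e. x e + (if e \<in> A then 1 else 0) - unitv c e + unitv e0 e)"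
          have cA: "c \<notin> A" "c \<noteq> d" "c \<noteq> e0" using c AC True e0C by auto
          have ZB: "Z \<in> Bset b Ev"
          proof (rule BsetI)
            fix e assume e: "e \<in> Ev" show "0 \<le> Z e \<and> Z e \<le> b e"
              using xB[OF e] Ab Cpos c cA ie(2) e0C
              by (cases "e \<in> A"; cases "e = c"; cases "e = e0") (auto simp: Z_def unitv_def x'_def)
          next
            fix e assume "e \<notin> Ev" thus "Z e = 0" using x0 AE c sub(3) ie(1) by (auto simp: Z_def unitv_def)
          qed
          have CZ: "C Z = (\<lambda>e. x e + unitv d e - unitv c e)"
            by (rule keyZ[OF True c _ _ _ ZB])
               (use pc cA True sub(1) e0 dne in \<open>auto simp: Z_def unitv_def split: if_splits\<close>)
          have x1Z: "?x1 e \<le> Z e" for e using c by (auto simp: x'_def Z_def unitv_def)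
          have "min (C Z d) (?x1 d) \<le> C ?x1 d" by (rule cfA2[OF cf ZB x1B x1Z])
          thus ?thesis using CZ cA True dne by (simp add: x'_def unitv_def)
        qed
      qed
      have "vsize Ev (C ?x1) \<le> vsize Ev (C Y)" by (rule cfA3[OF cf YB x1B x1Y])
      hence s1: "sum (C ?x1) Ev \<le> sum x Ev"
        using vsize_nonneg[OF cfB[OF cf x1B]] vsize_nonneg[OF x(1)] CY by simp
      have "sum ?x1 Ev \<le> sum (C ?x1) Ev" by (rule sum_mono) (use Lge in simp)
      moreover have "sum ?x1 Ev = sum x Ev + int (card A) - int (card Cs) + 1"
        unfolding x'_def using sum_ind[OF fin AE] sum_ind[OF fin sub(3)] ie(1) fin
        by (simp add: sum.distrib sum_subtractf unitv_def)
      ultimately show False using s1 card by linarith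
    qed
    show ?thesis using x'B Cx' noint by blast
  qed
qed

end

context
  fixes b :: "('w,'f) vec" and Ev :: "('w \<times> 'f) set" and C :: "('w,'f) vec \<Rightarrow> ('w,'f) vec"
  assumes cf: "choice_fun b Ev C"
begin

lemma legal_abs:
  assumes fin: "finite Ev" and x: "x \<in> Bset b Ev" "C x = x" and aE: "a \<in> Ev" and cE: "c \<in> Ev"
    and ac: "a \<noteq> c" and ia: "interesting b Ev C x a"
    and eq: "C (\<lambda>e. x e + unitv a e) = (\<lambda>e. x e + unitv a e - unitv c e)"
  shows "1 \<le> x c \<and> \<not> interesting b Ev C x c"
proof -
  let ?xa = "\<lambda>e. x e + unitv a e"
  have ai: "x a + 1 \<le> b a" using ia interesting_iff[OF cf x(1)] by blast
  have xaB: "?xa \<in> Bset b Ev" by (rule Bset_unit[OF x(1) aE ai])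
  have "0 \<le> C ?xa c" using BsetD[OF cfB[OF cf xaB] cE] by blast
  hence xc: "1 \<le> x c" using eq ac by (simp add: unitv_def)
  have "\<not> interesting b Ev C x c"
  proof
    assume ic: "interesting b Ev C x c"
    let ?xc = "\<lambda>e. x e + unitv c e"
    have ci: "x c + 1 \<le> b c" "C ?xc c > x c" using ic interesting_iff[OF cf x(1)] by blast+
    have xcB: "?xc \<in> Bset b Ev" by (rule Bset_unit[OF x(1) cE ci(1)])
    let ?z = "\<lambda>e. ?xa e + unitv c e"
    have zB: "?z \<in> Bset b Ev" by (rule Bset_unit[OF xaB cE]) (use ci ac in \<open>simp add: unitv_def\<close>)
    have le1: "C ?z d \<le> C ?xa d" for d
    proof -
      have m: "min (C ?z d) (?xa d) \<le> C ?xa d" by (rule cfA2[OF cf zB xaB]) (simp add: unitv_def)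
      show ?thesis
      proof (cases "d = c")
        case True
        hence "min (C ?z d) (x d) \<le> x d - 1" using m eq ac by (simp add: unitv_def)
        hence "C ?z d \<le> x d - 1" by linarith
        thus ?thesis using eq ac True by (simp add: unitv_def)
      next
        case False
        hence "C ?z d \<le> ?xa d" using cfle[OF cf zB, of d] by (simp add: unitv_def)
        thus ?thesis using m by simp
      qed
    qed
    have "vsize Ev (C ?xa) \<le> vsize Ev (C ?z)" by (rule cfA3[OF cf zB xaB]) (simp add: unitv_def)
    hence "sum (C ?xa) Ev \<le> sum (C ?z) Ev"
      using vsize_nonneg[OF cfB[OF cf zB]] vsize_nonneg[OF cfB[OF cf xaB]] by simp
    hence eqz: "C ?z d = C ?xa d" if "d \<in> Ev" for d
      using sum_le_eq[of Ev "C ?z" "C ?xa"] fin le1 that by blast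
    have sz: "sum (C ?z) Ev = sum x Ev"
    proof -
      have "sum (C ?z) Ev = sum (C ?xa) Ev" using eqz by (rule sum.cong[OF refl])
      also have "\<dots> = sum (\<lambda>e. x e + unitv a e - unitv c e) Ev" using eq by simp
      also have "\<dots> = sum x Ev" using fin aE cE by (simp add: sum.distrib sum_subtractf unitv_def)
      finally show ?thesis .
    qed
    have lo: "x d + unitv c d \<le> C ?xc d" if "d \<in> Ev" for d
    proof (cases "d = c")
      case True thus ?thesis using ci(2) by (simp add: unitv_def)
    next
      case False
      have "min (C ?z d) (?xc d) \<le> C ?xc d" by (rule cfA2[OF cf zB xcB]) (simp add: unitv_def)
      moreover have "C ?z d = x d + unitv a d" using eqz[OF that] eq False by (simp add: unitv_def)
      ultimately show ?thesis using False by (simp add: unitv_def)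
    qed
    have "sum (\<lambda>d. x d + unitv c d) Ev \<le> sum (C ?xc) Ev" by (rule sum_mono) (rule lo)
    moreover have "sum (\<lambda>d. x d + unitv c d) Ev = sum x Ev + 1" using fin cE by (simp add: sum.distrib unitv_def)
    moreover have "vsize Ev (C ?xc) \<le> vsize Ev (C ?z)" by (rule cfA3[OF cf zB xcB]) (simp add: unitv_def)
    hence "sum (C ?xc) Ev \<le> sum (C ?z) Ev"
      using vsize_nonneg[OF cfB[OF cf zB]] vsize_nonneg[OF cfB[OF cf xcB]] by simp
    ultimately show False using sz by linarith
  qed
  thus ?thesis using xc by blast
qed

end

fun nedge :: "('w,'f) node \<Rightarrow> 'w \<times> 'f" where
  "nedge (WN e) = e" | "nedge (FN e) = e"

theorem proposition3p4:
  fixes W :: "'w set" and F :: "'f set" and E :: "('w \<times> 'f) set"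
    and b :: "('w,'f) vec"
    and CW :: "'w \<Rightarrow> ('w,'f) vec \<Rightarrow> ('w,'f) vec" and CF :: "'f \<Rightarrow> ('w,'f) vec \<Rightarrow> ('w,'f) vec"
    and x chi :: "('w,'f) vec"
  assumes "instance_ok W F E b CW CF"
    and "stable W F E b CW CF x"
    and "x \<noteq> xmax W F E b CW CF"
    and "chi \<in> rotations E b CW CF x"
  shows "stable W F E b CW CF (\<lambda>e. x e + chi e) \<and> precF F E b CF x (\<lambda>e. x e + chi e)"
proof -
  have finW: "finite W" and finF: "finite F" and EWF: "E \<subseteq> W \<times> F"
    and cfW: "\<And>w. w \<in> W \<Longrightarrow> choice_fun b (Ew E w) (CW w)"
    and cfF: "\<And>f. f \<in> F \<Longrightarrow> choice_fun b (Ef E f) (CF f)"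
    using assms(1) unfolding instance_ok_def by auto
  have finE: "finite E" using finite_subset[OF EWF] finW finF by blast
  have finEw: "finite (Ew E w)" for w using finE unfolding Ew_def by simp
  have finEf: "finite (Ef E f)" for f using finE unfolding Ef_def by simp
  have x0: "\<And>e. e \<notin> E \<Longrightarrow> x e = 0"
    and accW: "\<And>w. w \<in> W \<Longrightarrow> acceptable b (Ew E w) (CW w) (res (Ew E w) x)"
    and accF: "\<And>f. f \<in> F \<Longrightarrow> acceptable b (Ef E f) (CF f) (res (Ef E f) x)"
    and nb: "\<And>e. \<not> blocking E b CW CF x e"
    using assms(2) unfolding stable_def gmatching_def by auto
  have xwB: "\<And>w. w \<in> W \<Longrightarrow> res (Ew E w) x \<in> Bset b (Ew E w) \<and> CW w (res (Ew E w) x) = res (Ew E w) x"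
    using accW unfolding acceptable_def by blast
  have xfB: "\<And>f. f \<in> F \<Longrightarrow> res (Ef E f) x \<in> Bset b (Ef E f) \<and> CF f (res (Ef E f) x) = res (Ef E f) x"
    using accF unfolding acceptable_def by blast
  have EW: "e \<in> E \<Longrightarrow> fst e \<in> W" for e using EWF by auto
  have EF: "e \<in> E \<Longrightarrow> snd e \<in> F" for e using EWF by auto
  have inEw: "e \<in> Ew E w \<longleftrightarrow> e \<in> E \<and> fst e = w" for e w unfolding Ew_def by simp
  have inEf: "e \<in> Ef E f \<longleftrightarrow> e \<in> E \<and> snd e = f" for e f unfolding Ef_def by simp
  have resin: "e \<in> Ev \<Longrightarrow> res Ev z e = z e" for e Ev and z :: "('w,'f) vec" unfolding res_def by simp

  obtain vs where cyc: "dcycle (Darcs E b CW CF x) (remainder (Darcs E b CW CF x) (Dnodes E b CF x)) vs"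
    and chi: "chi = chiR E b CF x (set vs)"
    using assms(4) unfolding rotations_def by blast
  define Up where "Up = Uplus E b CF x"
  define Um where "Um = Uminus E b CF x"
  define Ar where "Ar = Darcs E b CW CF x"
  define S where "S = set vs"
  define P where "P = {e. WN e \<in> S \<or> FN e \<in> S}"
  have "set vs \<subseteq> remainder (Darcs E b CW CF x) (Dnodes E b CF x)" using cyc unfolding dcycle_def by (elim conjE)
  hence SD: "S \<subseteq> Dnodes E b CF x" using remainder_sub unfolding S_def by (rule subset_trans)
  have PUU: "e \<in> P \<Longrightarrow> e \<in> Up \<or> e \<in> Um" for e
  proof -
    assume "e \<in> P"
    hence "WN e \<in> Dnodes E b CF x \<or> FN e \<in> Dnodes E b CF x" using SD unfolding P_def by blast
    thus ?thesis unfolding Dnodes_def Up_def Um_def by blast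
  qed
  have UpE: "e \<in> Up \<Longrightarrow> e \<in> E" for e unfolding Up_def Uplus_def by simp
  have UmE: "e \<in> Um \<Longrightarrow> e \<in> E" for e unfolding Um_def Uminus_def by simp
  have disj: "e \<in> Up \<Longrightarrow> e \<notin> Um" for e unfolding Up_def Um_def Uplus_def Uminus_def by simp
  have Upint: "e \<in> Up \<Longrightarrow> interesting b (Ef E (snd e)) (CF (snd e)) (res (Ef E (snd e)) x) e" for e
    unfolding Up_def Uplus_def by simp
  have Umpos: "e \<in> Um \<Longrightarrow> x e > 0" for e unfolding Um_def Uminus_def by simp
  have Upb: "e \<in> Up \<Longrightarrow> x e + 1 \<le> b e" for e
  proof -
    assume e: "e \<in> Up"
    have f: "snd e \<in> F" using EF UpE e by blast
    have "res (Ef E (snd e)) x e + 1 \<le> b e"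
      using Upint[OF e] interesting_iff[OF cfF[OF f] conjunct1[OF xfB[OF f]]] by blast
    thus ?thesis using e UpE inEf resin by metis
  qed
  have legalD: "a \<in> Up \<and> c \<in> Um \<and> snd c = snd a \<and> c \<noteq> a \<and>
      CF (snd a) (\<lambda>e. res (Ef E (snd a)) x e + unitv a e) = (\<lambda>e. res (Ef E (snd a)) x e + unitv a e - unitv c e)"
    if l: "legal_f_pair E b CF x a c" for a c
  proof -
    have a: "a \<in> Up" and c: "c \<in> Ef E (snd a)" "c \<noteq> a"
      and eq: "CF (snd a) (\<lambda>e. res (Ef E (snd a)) x e + unitv a e) = (\<lambda>e. res (Ef E (snd a)) x e + unitv a e - unitv c e)"
      using l unfolding legal_f_pair_def Up_def by auto
    have f: "snd a \<in> F" using EF UpE a by blast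
    have aE: "a \<in> Ef E (snd a)" using UpE[OF a] inEf by blast
    have r: "1 \<le> res (Ef E (snd a)) x c \<and> \<not> interesting b (Ef E (snd a)) (CF (snd a)) (res (Ef E (snd a)) x) c"
      by (rule legal_abs[OF cfF[OF f] finEf conjunct1[OF xfB[OF f]] conjunct2[OF xfB[OF f]] aE c(1)])
         (use c(2) Upint[OF a] eq in auto)
    have sc: "snd c = snd a" "c \<in> E" using c(1) inEf by auto
    have "c \<in> Um" unfolding Um_def Uminus_def using r sc resin c(1) by auto
    thus ?thesis using a c(2) sc eq by simp
  qed
  have essD: "c \<in> Um \<and> a \<in> Up \<and> fst c = fst a \<and>
      acceptable b (Ew E (fst c)) (CW (fst c)) (\<lambda>e. res (Ew E (fst c)) x e + unitv a e - unitv c e) \<and>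
      (\<forall>d\<in>(Up \<inter> Ew E (fst c)) - {a}.
          \<not> interesting b (Ew E (fst c)) (CW (fst c)) (\<lambda>e. res (Ew E (fst c)) x e + unitv a e - unitv c e) d)"
    if "essential_w_pair E b CW CF x c a" for c a
    using that unfolding essential_w_pair_def legal_w_pair_def Up_def Um_def by blast
  have ess1: "c \<in> Um \<and> a \<in> Up" if "essential_w_pair E b CW CF x c a" for c a
    using essD[OF that] by blast
  have leg1: "a \<in> Up \<and> c \<in> Um" if "legal_f_pair E b CF x a c" for a c
    using legalD[OF that] by blast
  have UpUm: "Up \<inter> Um = {}" using disj by blast
  obtain sc where scinj: "inj_on sc S" and scS: "\<And>v. v \<in> S \<Longrightarrow> sc v \<in> S \<and> (v, sc v) \<in> Ar"
    using cycle_sc[OF cyc] unfolding S_def Ar_def by blast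
  have finS: "finite S" unfolding S_def by simp
  have scimg: "sc ` S = S" by (rule endo_inj_surj[OF finS _ scinj]) (use scS in blast)
  have pred: "v \<in> S \<Longrightarrow> \<exists>u\<in>S. sc u = v \<and> (u, v) \<in> Ar" for v
  proof -
    assume "v \<in> S"
    then obtain u where "u \<in> S" "sc u = v" using scimg by (metis imageE)
    thus ?thesis using scS by blast
  qed
  have arcD: "(\<exists>a. u = WN a \<and> v = FN a \<and> a \<in> Up) \<or> (\<exists>c. u = FN c \<and> v = WN c \<and> c \<in> Um) \<or>
      (\<exists>a c. u = FN a \<and> v = FN c \<and> legal_f_pair E b CF x a c) \<or>
      (\<exists>c a. u = WN c \<and> v = WN a \<and> essential_w_pair E b CW CF x c a)" if "(u, v) \<in> Ar" for u v
    using that unfolding Ar_def Darcs_def Up_def Um_def by blast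
  have outWUp: "sc (WN e) = FN e" if h: "WN e \<in> S" "e \<in> Up" for e
  proof -
    have "(WN e, sc (WN e)) \<in> Ar" using scS[OF h(1)] by blast
    from arcD[OF this] show ?thesis using h UpUm by (elim disjE exE conjE) (auto dest: ess1 leg1)
  qed
  have outFUm: "sc (FN e) = WN e" if h: "FN e \<in> S" "e \<in> Um" for e
  proof -
    have "(FN e, sc (FN e)) \<in> Ar" using scS[OF h(1)] by blast
    from arcD[OF this] show ?thesis using h UpUm by (elim disjE exE conjE) (auto dest: ess1 leg1)
  qed
  have outFUp: "\<exists>c. sc (FN e) = FN c \<and> legal_f_pair E b CF x e c" if h: "FN e \<in> S" "e \<in> Up" for e
  proof -
    have "(FN e, sc (FN e)) \<in> Ar" using scS[OF h(1)] by blast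
    from arcD[OF this] show ?thesis using h UpUm by (elim disjE exE conjE) (auto dest: ess1 leg1)
  qed
  have outWUm: "\<exists>a. sc (WN e) = WN a \<and> essential_w_pair E b CW CF x e a" if h: "WN e \<in> S" "e \<in> Um" for e
  proof -
    have "(WN e, sc (WN e)) \<in> Ar" using scS[OF h(1)] by blast
    from arcD[OF this] show ?thesis using h UpUm by (elim disjE exE conjE) (auto dest: ess1 leg1)
  qed
  have inFUp: "WN e \<in> S" if h: "FN e \<in> S" "e \<in> Up" for e
  proof -
    obtain u where u: "u \<in> S" "(u, FN e) \<in> Ar" using pred[OF h(1)] by blast
    from arcD[OF u(2)] show ?thesis using u(1) h UpUm by (elim disjE exE conjE) (auto dest: ess1 leg1)
  qed
  have inWUm: "FN e \<in> S" if h: "WN e \<in> S" "e \<in> Um" for e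
  proof -
    obtain u where u: "u \<in> S" "(u, WN e) \<in> Ar" using pred[OF h(1)] by blast
    from arcD[OF u(2)] show ?thesis using u(1) h UpUm by (elim disjE exE conjE) (auto dest: ess1 leg1)
  qed
  have inFUm: "\<exists>a. FN a \<in> S \<and> legal_f_pair E b CF x a e" if h: "FN e \<in> S" "e \<in> Um" for e
  proof -
    obtain u where u: "u \<in> S" "(u, FN e) \<in> Ar" using pred[OF h(1)] by blast
    from arcD[OF u(2)] show ?thesis using u(1) h UpUm by (elim disjE exE conjE) (auto dest: ess1 leg1)
  qed
  have inWUp: "\<exists>c. WN c \<in> S \<and> essential_w_pair E b CW CF x c e" if h: "WN e \<in> S" "e \<in> Up" for e
  proof -
    obtain u where u: "u \<in> S" "(u, WN e) \<in> Ar" using pred[OF h(1)] by blast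
    from arcD[OF u(2)] show ?thesis using u(1) h UpUm by (elim disjE exE conjE) (auto dest: ess1 leg1)
  qed
  have both: "WN e \<in> S \<and> FN e \<in> S" if hP: "e \<in> P" for e
  proof -
    have o: "WN e \<in> S \<or> FN e \<in> S" using hP unfolding P_def by blast
    show ?thesis
    proof (cases "e \<in> Up")
      case True
      show ?thesis
      proof (cases "WN e \<in> S")
        case True
        hence "sc (WN e) \<in> S" using scS by blast
        thus ?thesis using outWUp[OF True \<open>e \<in> Up\<close>] True by simp
      next
        case False
        hence "FN e \<in> S" using o by blast
        thus ?thesis using inFUp[OF _ \<open>e \<in> Up\<close>] by blast
      qed
    next
      case False
      hence eUm: "e \<in> Um" using PUU[OF hP] by blast
      show ?thesis
      proof (cases "FN e \<in> S")
        case True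
        hence "sc (FN e) \<in> S" using scS by blast
        thus ?thesis using outFUm[OF True eUm] True by simp
      next
        case False
        hence "WN e \<in> S" using o by blast
        thus ?thesis using inWUm[OF _ eUm] by blast
      qed
    qed
  qed
  have PE: "e \<in> P \<Longrightarrow> e \<in> E" for e using PUU UpE UmE by blast
  define xp where "xp = (\<lambda>e. x e + chi e)"
  have chiv: "chi e = (if e \<in> P then (if e \<in> Up then 1 else -1) else 0)" for e
    unfolding chi chiR_def P_def S_def Up_def by simp
  have resxp: "res Ev xp = (\<lambda>e. res Ev x e + (if e \<in> {e \<in> Ev. e \<in> P \<and> e \<in> Up} then 1 else 0)
      - (if e \<in> {e \<in> Ev. e \<in> P \<and> e \<notin> Up} then 1 else 0))" for Ev
    unfolding xp_def res_def fun_eq_iff using chiv by auto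
  have Fres: "acceptable b (Ef E f) (CF f) (res (Ef E f) xp) \<and>
      pref_le b (Ef E f) (CF f) (res (Ef E f) x) (res (Ef E f) xp) \<and>
      (\<forall>e. interesting b (Ef E f) (CF f) (res (Ef E f) xp) e \<longrightarrow> e \<in> Up)" if f: "f \<in> F" for f
  proof -
    define Ev where "Ev = Ef E f"
    define A where "A = {e \<in> Ev. e \<in> P \<and> e \<in> Up}"
    define Cs where "Cs = {e \<in> Ev. e \<in> P \<and> e \<notin> Up}"
    define xf where "xf = res Ev x"
    have cf: "choice_fun b Ev (CF f)" unfolding Ev_def by (rule cfF[OF f])
    have fin: "finite Ev" unfolding Ev_def by (rule finEf)
    have xB: "xf \<in> Bset b Ev" and xC: "CF f xf = xf" using xfB[OF f] unfolding xf_def Ev_def by auto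
    have sub: "A \<subseteq> Ev" "Cs \<subseteq> Ev" "A \<inter> Cs = {}" unfolding A_def Cs_def by auto
    have Ab: "\<forall>a\<in>A. xf a + 1 \<le> b a" unfolding A_def xf_def using Upb resin by auto
    have pair: "\<forall>c\<in>Cs. \<exists>a\<in>A. CF f (\<lambda>e. xf e + unitv a e) = (\<lambda>e. xf e + unitv a e - unitv c e)"
    proof
      fix c assume c: "c \<in> Cs"
      hence cP: "c \<in> P" and cnUp: "c \<notin> Up" and cEv: "c \<in> Ev" unfolding Cs_def by auto
      have cUm: "c \<in> Um" using PUU[OF cP] cnUp by blast
      obtain a where a: "FN a \<in> S" "legal_f_pair E b CF x a c" using inFUm[OF conjunct2[OF both[OF cP]] cUm] by blast
      have la: "a \<in> Up" "snd c = snd a"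
        "CF (snd a) (\<lambda>e. res (Ef E (snd a)) x e + unitv a e) = (\<lambda>e. res (Ef E (snd a)) x e + unitv a e - unitv c e)"
        using legalD[OF a(2)] by auto
      have sa: "snd a = f" using cEv la(2) inEf unfolding Ev_def by auto
      have aA: "a \<in> A" unfolding A_def Ev_def P_def using a(1) la(1) sa UpE inEf by auto
      show "\<exists>a\<in>A. CF f (\<lambda>e. xf e + unitv a e) = (\<lambda>e. xf e + unitv a e - unitv c e)"
        using aA la(3) sa unfolding xf_def Ev_def by auto
    qed
    have card: "card A \<le> card Cs"
    proof (rule card_inj_on_le)
      show "finite Cs" using finite_subset[OF sub(2) fin] .
      show "inj_on (\<lambda>a. nedge (sc (FN a))) A"
      proof (rule inj_onI)
        fix a1 a2 assume a1: "a1 \<in> A" and a2: "a2 \<in> A" and eq: "nedge (sc (FN a1)) = nedge (sc (FN a2))"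
        have p1: "a1 \<in> P" "a1 \<in> Up" and p2: "a2 \<in> P" "a2 \<in> Up" using a1 a2 unfolding A_def by auto
        obtain c1 where c1: "sc (FN a1) = FN c1" using outFUp[OF conjunct2[OF both[OF p1(1)]] p1(2)] by blast
        obtain c2 where c2: "sc (FN a2) = FN c2" using outFUp[OF conjunct2[OF both[OF p2(1)]] p2(2)] by blast
        have "sc (FN a1) = sc (FN a2)" using eq c1 c2 by simp
        hence "FN a1 = FN a2" using inj_onD[OF scinj] both[OF p1(1)] both[OF p2(1)] by blast
        thus "a1 = a2" by simp
      qed
      show "(\<lambda>a. nedge (sc (FN a))) ` A \<subseteq> Cs"
      proof
        fix c assume "c \<in> (\<lambda>a. nedge (sc (FN a))) ` A"
        then obtain a where a: "a \<in> A" and ce: "c = nedge (sc (FN a))" by blast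
        have p: "a \<in> P" "a \<in> Up" "a \<in> Ev" using a unfolding A_def by auto
        obtain c' where c': "sc (FN a) = FN c'" "legal_f_pair E b CF x a c'"
          using outFUp[OF conjunct2[OF both[OF p(1)]] p(2)] by blast
        have cc: "c = c'" using ce c'(1) by simp
        have l: "c' \<in> Um" "snd c' = snd a" using legalD[OF c'(2)] by auto
        have "FN c' \<in> S" using scS[OF conjunct2[OF both[OF p(1)]]] c'(1) by simp
        hence "c' \<in> P" unfolding P_def by blast
        moreover have "c' \<in> Ev" using l UmE p(3) inEf unfolding Ev_def by auto
        moreover have "c' \<notin> Up" using disj l(1) by blast
        ultimately show "c \<in> Cs" unfolding Cs_def using cc by auto
      qed
    qed
    have rx: "res Ev xp = (\<lambda>e. xf e + (if e \<in> A then 1 else 0) - (if e \<in> Cs then 1 else 0))"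
      unfolding A_def Cs_def xf_def by (rule resxp)
    have cor: "(\<lambda>e. xf e + (if e \<in> A then 1 else 0) - (if e \<in> Cs then 1 else 0)) \<in> Bset b Ev \<and>
        CF f (\<lambda>e. xf e + (if e \<in> A then 1 else 0) - (if e \<in> Cs then 1 else 0)) = (\<lambda>e. xf e + (if e \<in> A then 1 else 0) - (if e \<in> Cs then 1 else 0)) \<and>
        CF f (\<lambda>e. max (xf e) (xf e + (if e \<in> A then 1 else 0) - (if e \<in> Cs then 1 else 0))) = (\<lambda>e. xf e + (if e \<in> A then 1 else 0) - (if e \<in> Cs then 1 else 0)) \<and>
        (\<lambda>e. xf e + (if e \<in> A then 1 else 0)) \<in> Bset b Ev \<and>
        CF f (\<lambda>e. xf e + (if e \<in> A then 1 else 0)) = (\<lambda>e. xf e + (if e \<in> A then 1 else 0) - (if e \<in> Cs then 1 else 0))"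
      by (rule fside_cor[OF cf fin xB xC sub Ab pair card])
    hence acc: "acceptable b Ev (CF f) (res Ev xp)" unfolding acceptable_def rx by blast
    have pl: "pref_le b Ev (CF f) xf (res Ev xp)"
    proof (cases "A = {}")
      case True
      hence "Cs = {}" using pair by blast
      hence "res Ev xp = xf" using True rx by simp
      thus ?thesis unfolding pref_le_def by simp
    next
      case False
      then obtain a where a: "a \<in> A" by blast
      have "res Ev xp a \<noteq> xf a" using a sub(3) rx by auto
      hence ne: "res Ev xp \<noteq> xf" by metis
      have "(\<lambda>e. max (res Ev xp e) (xf e)) = (\<lambda>e. max (xf e) (xf e + (if e \<in> A then 1 else 0) - (if e \<in> Cs then 1 else 0)))"
        unfolding rx by (simp add: max.commute)
      hence "CF f (\<lambda>e. max (res Ev xp e) (xf e)) = res Ev xp" using cor rx by simp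
      thus ?thesis unfolding pref_le_def pref_strict_def using acc ne xB xC unfolding acceptable_def by blast
    qed
    have bl: "\<forall>e. interesting b Ev (CF f) (res Ev xp) e \<longrightarrow> e \<in> Up"
    proof (intro allI impI)
      fix e assume "interesting b Ev (CF f) (res Ev xp) e"
      hence "interesting b Ev (CF f) (\<lambda>e. xf e + (if e \<in> A then 1 else 0) - (if e \<in> Cs then 1 else 0)) e"
        unfolding rx .
      hence "e \<in> A \<or> interesting b Ev (CF f) xf e"
        by (rule fside_block[OF cf fin xB xC sub Ab pair card])
      thus "e \<in> Up"
      proof
        assume "e \<in> A" thus ?thesis unfolding A_def by blast
      next
        assume i: "interesting b Ev (CF f) xf e"
        hence "e \<in> Ev" unfolding interesting_def by blast
        hence "e \<in> E" "snd e = f" using inEf unfolding Ev_def by auto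
        thus ?thesis using i unfolding Up_def Uplus_def xf_def Ev_def by simp
      qed
    qed
    show ?thesis using acc pl bl unfolding Ev_def xf_def by blast
  qed
  have Wres: "acceptable b (Ew E w) (CW w) (res (Ew E w) xp) \<and>
      (\<forall>e\<in>Up \<inter> Ew E w. \<not> interesting b (Ew E w) (CW w) (res (Ew E w) xp) e)" if w: "w \<in> W" for w
  proof -
    define Ev where "Ev = Ew E w"
    define A where "A = {e \<in> Ev. e \<in> P \<and> e \<in> Up}"
    define Cs where "Cs = {e \<in> Ev. e \<in> P \<and> e \<notin> Up}"
    define U where "U = Up \<inter> Ev"
    define xw where "xw = res Ev x"
    have cf: "choice_fun b Ev (CW w)" unfolding Ev_def by (rule cfW[OF w])
    have fin: "finite Ev" unfolding Ev_def by (rule finEw)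
    have xB: "xw \<in> Bset b Ev" and xC: "CW w xw = xw" using xwB[OF w] unfolding xw_def Ev_def by auto
    have sub: "A \<subseteq> U" "U \<subseteq> Ev" "Cs \<subseteq> Ev" "U \<inter> Cs = {}" unfolding A_def Cs_def U_def by auto
    have Ab: "\<forall>a\<in>A. xw a + 1 \<le> b a" unfolding A_def xw_def using Upb resin by auto
    have Cpos: "\<forall>c\<in>Cs. 1 \<le> xw c"
    proof
      fix c assume c: "c \<in> Cs"
      hence cP: "c \<in> P" and cnUp: "c \<notin> Up" and cEv: "c \<in> Ev" unfolding Cs_def by auto
      have cUm: "c \<in> Um" using PUU[OF cP] cnUp by blast
      show "1 \<le> xw c" using Umpos[OF cUm] resin[OF cEv] unfolding xw_def by simp
    qed
    have niU: "\<forall>d\<in>U. \<not> interesting b Ev (CW w) xw d"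
    proof
      fix d assume d: "d \<in> U"
      hence dUp: "d \<in> Up" and dEv: "d \<in> Ev" unfolding U_def by auto
      have dE: "d \<in> E" "fst d = w" using dEv inEw unfolding Ev_def by auto
      show "\<not> interesting b Ev (CW w) xw d"
        using nb[of d] Upint[OF dUp] dE unfolding blocking_def xw_def Ev_def by auto
    qed
    have pair: "\<forall>a\<in>A. \<exists>c\<in>Cs. (\<lambda>e. xw e + unitv a e - unitv c e) \<in> Bset b Ev \<and>
                 CW w (\<lambda>e. xw e + unitv a e - unitv c e) = (\<lambda>e. xw e + unitv a e - unitv c e) \<and>
                 (\<forall>d\<in>U - {a}. \<not> interesting b Ev (CW w) (\<lambda>e. xw e + unitv a e - unitv c e) d)"
    proof
      fix a assume a: "a \<in> A"
      hence aP: "a \<in> P" and aUp: "a \<in> Up" and aEv: "a \<in> Ev" unfolding A_def by auto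
      obtain c where c: "WN c \<in> S" "essential_w_pair E b CW CF x c a"
        using inWUp[OF conjunct1[OF both[OF aP]] aUp] by blast
      have es: "c \<in> Um" "fst c = fst a"
        "acceptable b (Ew E (fst c)) (CW (fst c)) (\<lambda>e. res (Ew E (fst c)) x e + unitv a e - unitv c e)"
        "\<forall>d\<in>(Up \<inter> Ew E (fst c)) - {a}.
          \<not> interesting b (Ew E (fst c)) (CW (fst c)) (\<lambda>e. res (Ew E (fst c)) x e + unitv a e - unitv c e) d"
        using essD[OF c(2)] by auto
      have fa: "fst a = w" using aEv inEw unfolding Ev_def by auto
      have fc: "fst c = w" using es(2) fa by simp
      have cCs: "c \<in> Cs"
      proof -
        have "c \<in> Ev" using UmE[OF es(1)] fc inEw unfolding Ev_def by auto
        moreover have "c \<in> P" using c(1) unfolding P_def by blast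
        moreover have "c \<notin> Up" using disj es(1) by blast
        ultimately show ?thesis unfolding Cs_def by blast
      qed
      show "\<exists>c\<in>Cs. (\<lambda>e. xw e + unitv a e - unitv c e) \<in> Bset b Ev \<and>
                 CW w (\<lambda>e. xw e + unitv a e - unitv c e) = (\<lambda>e. xw e + unitv a e - unitv c e) \<and>
                 (\<forall>d\<in>U - {a}. \<not> interesting b Ev (CW w) (\<lambda>e. xw e + unitv a e - unitv c e) d)"
        using cCs es(3,4) fc unfolding acceptable_def xw_def U_def Ev_def by auto
    qed
    have card: "card Cs \<le> card A"
    proof (rule card_inj_on_le)
      show "finite A" using finite_subset[OF _ fin] sub(1,2) by blast
      show "inj_on (\<lambda>c. nedge (sc (WN c))) Cs"
      proof (rule inj_onI)
        fix c1 c2 assume c1: "c1 \<in> Cs" and c2: "c2 \<in> Cs" and eq: "nedge (sc (WN c1)) = nedge (sc (WN c2))"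
        have p1: "c1 \<in> P" "c1 \<notin> Up" and p2: "c2 \<in> P" "c2 \<notin> Up" using c1 c2 unfolding Cs_def by auto
        have u1: "c1 \<in> Um" using PUU[OF p1(1)] p1(2) by blast
        have u2: "c2 \<in> Um" using PUU[OF p2(1)] p2(2) by blast
        obtain a1 where a1: "sc (WN c1) = WN a1" using outWUm[OF conjunct1[OF both[OF p1(1)]] u1] by blast
        obtain a2 where a2: "sc (WN c2) = WN a2" using outWUm[OF conjunct1[OF both[OF p2(1)]] u2] by blast
        have "sc (WN c1) = sc (WN c2)" using eq a1 a2 by simp
        hence "WN c1 = WN c2" using inj_onD[OF scinj] both[OF p1(1)] both[OF p2(1)] by blast
        thus "c1 = c2" by simp
      qed
      show "(\<lambda>c. nedge (sc (WN c))) ` Cs \<subseteq> A"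
      proof
        fix a assume "a \<in> (\<lambda>c. nedge (sc (WN c))) ` Cs"
        then obtain c where c: "c \<in> Cs" and ae: "a = nedge (sc (WN c))" by blast
        have p: "c \<in> P" "c \<notin> Up" "c \<in> Ev" using c unfolding Cs_def by auto
        have u: "c \<in> Um" using PUU[OF p(1)] p(2) by blast
        obtain a' where a': "sc (WN c) = WN a'" "essential_w_pair E b CW CF x c a'"
          using outWUm[OF conjunct1[OF both[OF p(1)]] u] by blast
        have aa: "a = a'" using ae a'(1) by simp
        have l: "a' \<in> Up" "fst c = fst a'" using essD[OF a'(2)] by auto
        have "WN a' \<in> S" using scS[OF conjunct1[OF both[OF p(1)]]] a'(1) by simp
        hence "a' \<in> P" unfolding P_def by blast
        moreover have "a' \<in> Ev" using l UpE p(3) inEw unfolding Ev_def by auto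
        ultimately show "a \<in> A" unfolding A_def using aa l(1) by auto
      qed
    qed
    have rx: "res Ev xp = (\<lambda>e. xw e + (if e \<in> A then 1 else 0) - (if e \<in> Cs then 1 else 0))"
      unfolding A_def Cs_def xw_def by (rule resxp)
    have r: "(\<lambda>e. xw e + (if e \<in> A then 1 else 0) - (if e \<in> Cs then 1 else 0)) \<in> Bset b Ev \<and>
      CW w (\<lambda>e. xw e + (if e \<in> A then 1 else 0) - (if e \<in> Cs then 1 else 0)) = (\<lambda>e. xw e + (if e \<in> A then 1 else 0) - (if e \<in> Cs then 1 else 0)) \<and>
      (\<forall>e\<in>U. \<not> interesting b Ev (CW w) (\<lambda>e. xw e + (if e \<in> A then 1 else 0) - (if e \<in> Cs then 1 else 0)) e)"
      by (rule wside[OF cf fin xB xC sub Ab Cpos niU pair card])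
    show ?thesis using r unfolding rx[symmetric] acceptable_def U_def Ev_def by blast
  qed
  have xpE: "xp e = 0" if "e \<notin> E" for e
  proof -
    have "e \<notin> P" using PE that by blast
    thus ?thesis using x0[OF that] chiv[of e] unfolding xp_def by simp
  qed
  have gm: "gmatching W F E b CW CF xp"
    unfolding gmatching_def
  proof (intro conjI allI impI ballI)
    fix e assume "e \<notin> E" thus "xp e = 0" by (rule xpE)
  next
    fix e assume e: "e \<in> E"
    have w: "fst e \<in> W" using EW[OF e] .
    have ew: "e \<in> Ew E (fst e)" using e inEw by simp
    have "res (Ew E (fst e)) xp \<in> Bset b (Ew E (fst e))" using Wres[OF w] unfolding acceptable_def by blast
    hence "0 \<le> res (Ew E (fst e)) xp e \<and> res (Ew E (fst e)) xp e \<le> b e" using BsetD ew by blast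
    thus "0 \<le> xp e" "xp e \<le> b e" using resin[OF ew] by auto
  next
    fix w assume "w \<in> W" thus "acceptable b (Ew E w) (CW w) (res (Ew E w) xp)" using Wres by blast
  next
    fix f assume "f \<in> F" thus "acceptable b (Ef E f) (CF f) (res (Ef E f) xp)" using Fres by blast
  qed
  have nbl: "\<not> blocking E b CW CF xp e" for e
  proof
    assume bl: "blocking E b CW CF xp e"
    hence e: "e \<in> E" and iw: "interesting b (Ew E (fst e)) (CW (fst e)) (res (Ew E (fst e)) xp) e"
      and iff: "interesting b (Ef E (snd e)) (CF (snd e)) (res (Ef E (snd e)) xp) e"
      unfolding blocking_def by auto
    have "e \<in> Up" using Fres[OF EF[OF e]] iff by blast
    moreover have "e \<in> Ew E (fst e)" using e inEw by simp
    ultimately show False using Wres[OF EW[OF e]] iw by blast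
  qed
  have st: "stable W F E b CW CF xp" unfolding stable_def using gm nbl by blast
  have ne: "x \<noteq> xp"
  proof -
    have "vs \<noteq> []" using cyc unfolding dcycle_def by blast
    then obtain v where v: "v \<in> S" unfolding S_def by (cases vs) auto
    have "nedge v \<in> P" using v unfolding P_def by (cases v) auto
    hence "chi (nedge v) \<noteq> 0" using chiv by simp
    hence "x (nedge v) \<noteq> xp (nedge v)" unfolding xp_def by simp
    thus ?thesis by metis
  qed
  have pf: "precF F E b CF x xp" unfolding precF_def using ne Fres by blast
  show ?thesis using st pf unfolding xp_def by blast
qed

end
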